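(* Let $n\ge2$, let $a,b$ satisfy $0<a\le1$, $0<b\le\frac12$, $2a\ge1+b$, and let $0<c_0\le1$. If $F$ is an $(a,b)$-set of divergence, then $$\dim_H\big(F\cap[0,c_0]^n\big)\le \alpha:=\frac12+(n-1)a+b.$$
   Context: For $k\ge k_0$ let $R_k=2^k$, $D_k=R_k^{(n-(n-1)a+nb)/(n+1)}$, $Q_k=R_k^{\frac{n-1}{n+1}(2a-b-1)}$. A point $(p_1/q,\dots,p_n/q)$, $p_j,q\in\mathbb{Z}$, is an admissible fraction if $\gcd(p_1,q)=1$ and: $p_2,\dots,p_n$ arbitrary when $q$ is odd; all even when $q\equiv0\pmod4$; all odd when $q\equiv2\pmod4$. Fix $0<c\ll1$. Let $\mathcal{A}_k$ be the collection of axis-parallel boxes ("slabs") of dimensions $cR_k^{-1/2}\times cR_k^{-1}\times\cdots\times cR_k^{-1}$ (long side in the $x_1$ direction) centered at $\big(2p_1R_k/(qD_k^2),p_2/(D_kq),\dots,p_n/(D_kq)\big)$ with $(p_1/q,\dots,p_n/q)$ admissible and $1\le q\le Q_k$; $F_k=\bigcup_{s\in\mathcal{A}_k}s$. The $(a,b)$-set of divergence is $F=\limsup_{k\to\infty}F_k=\bigcap_N\bigcup_{k\ge N}F_k$. $\dim_H$ denotes Hausdorff dimension. *)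

theory Defs
  imports "HOL-Analysis.Analysis"
begin

definition hausdorff_content :: "real \<Rightarrow> real \<Rightarrow> 'a::metric_space set \<Rightarrow> ennreal" where
  "hausdorff_content \<delta> s E =
     (INF U \<in> {U :: nat \<Rightarrow> 'a set. (\<forall>i. bounded (U i) \<and> diameter (U i) \<le> \<delta>) \<and> E \<subseteq> (\<Union>i. U i)}.
        (\<Sum>i. ennreal (diameter (U i) powr s)))"

definition hausdorff_measure :: "real \<Rightarrow> 'a::metric_space set \<Rightarrow> ennreal" where
  "hausdorff_measure s E = (SUP \<delta> \<in> {0<..}. hausdorff_content \<delta> s E)"

definition hausdorff_dim :: "'a::metric_space set \<Rightarrow> ereal" where
  "hausdorff_dim E = Inf {ereal s | s. 0 \<le> s \<and> hausdorff_measure s E = 0}"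

definition Rk :: "nat \<Rightarrow> real" where "Rk k = 2 ^ k"

definition Dk :: "nat \<Rightarrow> real \<Rightarrow> real \<Rightarrow> nat \<Rightarrow> real" where
  "Dk n a b k = Rk k powr ((real n - (real n - 1) * a + real n * b) / (real n + 1))"

definition Qk :: "nat \<Rightarrow> real \<Rightarrow> real \<Rightarrow> nat \<Rightarrow> real" where
  "Qk n a b k = Rk k powr ((real n - 1) / (real n + 1) * (2 * a - b - 1))"

text \<open>Admissible fraction (p_1/q,...,p_n/q); j1 is the index playing the role of coordinate 1.\<close>
definition admissible :: "'n \<Rightarrow> ('n \<Rightarrow> int) \<Rightarrow> int \<Rightarrow> bool" where
  "admissible j1 p q \<longleftrightarrow> gcd (p j1) q = 1 \<and>
     (odd q \<or> (q mod 4 = 0 \<and> (\<forall>i. i \<noteq> j1 \<longrightarrow> even (p i)))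
            \<or> (q mod 4 = 2 \<and> (\<forall>i. i \<noteq> j1 \<longrightarrow> odd (p i))))"

definition slab :: "'n::finite \<Rightarrow> real \<Rightarrow> nat \<Rightarrow> real^'n \<Rightarrow> (real^'n) set" where
  "slab j1 c k z = {x. \<bar>x $ j1 - z $ j1\<bar> \<le> c * Rk k powr (-1/2) / 2 \<and>
                       (\<forall>i. i \<noteq> j1 \<longrightarrow> \<bar>x $ i - z $ i\<bar> \<le> c * Rk k powr (-1) / 2)}"

definition slab_center :: "'n::finite \<Rightarrow> real \<Rightarrow> real \<Rightarrow> nat \<Rightarrow> ('n \<Rightarrow> int) \<Rightarrow> int \<Rightarrow> real^'n" where
  "slab_center j1 a b k p q =
     (\<chi> i. if i = j1
           then 2 * real_of_int (p i) * Rk k / (real_of_int q * (Dk CARD('n) a b k)\<^sup>2)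
           else real_of_int (p i) / (Dk CARD('n) a b k * real_of_int q))"

definition Fk :: "'n::finite \<Rightarrow> real \<Rightarrow> real \<Rightarrow> real \<Rightarrow> nat \<Rightarrow> (real^'n) set" where
  "Fk j1 a b c k = (\<Union> {slab j1 c k (slab_center j1 a b k p q) | p q.
       admissible j1 p q \<and> 1 \<le> q \<and> real_of_int q \<le> Qk CARD('n) a b k})"

definition divergence_set :: "'n::finite \<Rightarrow> real \<Rightarrow> real \<Rightarrow> real \<Rightarrow> (real^'n) set" where
  "divergence_set j1 a b c = (\<Inter>N. \<Union>k\<in>{N..}. Fk j1 a b c k)"

end

theory Submission
  imports Defs
begin



lemma bounded_diam_le:
  fixes S :: "'a::real_normed_vector set"
  assumes "0 \<le> d" "\<And>x y. x \<in> S \<Longrightarrow> y \<in> S \<Longrightarrow> norm (x - y) \<le> d"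
  shows "bounded S" "diameter S \<le> d"
proof -
  show "diameter S \<le> d" using assms by (intro diameter_le) auto
  show "bounded S"
  proof (cases "S = {}")
    case False
    then obtain x0 where "x0 \<in> S" by auto
    then have "S \<subseteq> cball x0 d" using assms(2) by (auto simp: dist_norm)
    then show ?thesis using bounded_cball bounded_subset by blast
  qed simp
qed

lemma content_le:
  fixes E :: "'a::metric_space set" and V :: "nat \<Rightarrow> 'a set set" and r :: "nat \<Rightarrow> real"
  assumes fin: "\<And>k. finite (V k)"
    and bd: "\<And>k A. A \<in> V k \<Longrightarrow> bounded A \<and> diameter A \<le> r k \<and> diameter A \<le> \<delta>"
    and s: "0 \<le> s" and dpos: "0 \<le> \<delta>"
    and summ: "summable (\<lambda>k. real (card (V k)) * r k powr s)"
    and cov: "E \<subseteq> (\<Union>k. \<Union>(V k))"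
  shows "hausdorff_content \<delta> s E \<le> ennreal (\<Sum>k. real (card (V k)) * r k powr s)"
proof -
  obtain g where g: "\<And>k. bij_betw (g k) {0..<card (V k)} (V k)"
    using ex_bij_betw_nat_finite[OF fin] by metis
  define W where "W k j = (if j < card (V k) then g k j else {})" for k j
  have Wmem: "j < card (V k) \<Longrightarrow> W k j \<in> V k" for k j
    using g[of k] by (auto simp: W_def bij_betw_def)
  define U where "U i = W (fst (prod_decode i)) (snd (prod_decode i))" for i
  define f where "f i = diameter (U i) powr s" for i
  define S where "S = (\<Sum>k. real (card (V k)) * r k powr s)"
  have Wsum: "(\<Sum>j<J. diameter (W k j) powr s) \<le> real (card (V k)) * r k powr s" for k J
  proof -
    have "(\<Sum>j<J. diameter (W k j) powr s) = (\<Sum>j\<in>{..<J} \<inter> {..<card (V k)}. diameter (W k j) powr s)"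
      by (rule sum.mono_neutral_right) (auto simp: W_def)
    also have "\<dots> \<le> (\<Sum>j\<in>{..<card (V k)}. diameter (W k j) powr s)"
      by (rule sum_mono2) auto
    also have "\<dots> \<le> (\<Sum>j\<in>{..<card (V k)}. r k powr s)"
    proof (rule sum_mono)
      fix j assume "j \<in> {..<card (V k)}"
      then have "W k j \<in> V k" using Wmem by auto
      then show "diameter (W k j) powr s \<le> r k powr s"
        using bd[of "W k j" k] s by (intro powr_mono2) (auto simp: diameter_ge_0)
    qed
    finally show ?thesis by simp
  qed
  have fnn: "0 \<le> f i" for i by (simp add: f_def)
  have partial: "(\<Sum>i<m. f i) \<le> S" for m
  proof -
    have KJ: "prod_decode ` {..<m} \<subseteq> {..<m} \<times> {..<m}"
    proof
      fix p assume "p \<in> prod_decode ` {..<m}"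
      then obtain i where i: "i < m" "p = prod_decode i" by auto
      obtain x y where xy: "p = (x, y)" by (cases p)
      then have "prod_encode (x, y) = i" using i by (metis prod_decode_inverse)
      then have "x \<le> i" "y \<le> i" using le_prod_encode_1 le_prod_encode_2 by metis+
      then show "p \<in> {..<m} \<times> {..<m}" using xy i by simp
    qed
    have "(\<Sum>i<m. f i) = (\<Sum>p\<in>prod_decode ` {..<m}. diameter (W (fst p) (snd p)) powr s)"
      by (subst sum.reindex) (auto simp: f_def U_def inj_on_def intro: inj_prod_decode[THEN inj_onD])
    also have "\<dots> \<le> (\<Sum>p\<in>{..<m} \<times> {..<m}. diameter (W (fst p) (snd p)) powr s)"
      by (rule sum_mono2[OF _ KJ]) auto
    also have "\<dots> = (\<Sum>k<m. \<Sum>j<m. diameter (W k j) powr s)"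
      by (simp add: sum.cartesian_product split_def)
    also have "\<dots> \<le> (\<Sum>k<m. real (card (V k)) * r k powr s)"
      by (rule sum_mono) (rule Wsum)
    also have "\<dots> \<le> S" unfolding S_def
      by (rule sum_le_suminf[OF summ]) auto
    finally show ?thesis .
  qed
  have sf: "summable f" by (rule summableI_nonneg_bounded[OF fnn partial])
  have "(\<Sum>i. ennreal (f i)) = ennreal (\<Sum>i. f i)" by (rule suminf_ennreal2[OF fnn sf])
  also have "\<dots> \<le> ennreal S" by (intro ennreal_leI suminf_le_const[OF sf partial])
  finally have sumle: "(\<Sum>i. ennreal (diameter (U i) powr s)) \<le> ennreal S" by (simp add: f_def)
  have Umem: "U \<in> {U. (\<forall>i. bounded (U i) \<and> diameter (U i) \<le> \<delta>) \<and> E \<subseteq> (\<Union>i. U i)}"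
  proof safe
    fix i
    have "U i = {} \<or> U i \<in> V (fst (prod_decode i))"
      using Wmem by (auto simp: U_def W_def)
    then show "bounded (U i)" "diameter (U i) \<le> \<delta>"
      using bd dpos by auto
  next
    fix x assume "x \<in> E"
    then obtain k A where "A \<in> V k" "x \<in> A" using cov by auto
    then obtain j where j: "j < card (V k)" "g k j = A"
      using g[of k] unfolding bij_betw_def by (metis atLeastLessThan_iff imageE)
    then have "U (prod_encode (k, j)) = A" by (simp add: U_def W_def)
    then show "x \<in> (\<Union>i. U i)" using \<open>x \<in> A\<close> by blast
  qed
  have "hausdorff_content \<delta> s E \<le> (\<Sum>i. ennreal (diameter (U i) powr s))"
    unfolding hausdorff_content_def by (rule INF_lower[OF Umem])
  then show ?thesis using sumle S_def by simp
qed



lemma int_in_floor_range: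
  assumes "\<bar>real_of_int z\<bar> \<le> A"
  shows "z \<in> {-\<lfloor>A\<rfloor>..\<lfloor>A\<rfloor>}"
proof -
  have "z \<le> \<lfloor>A\<rfloor>" "- z \<le> \<lfloor>A\<rfloor>" using assms by (simp_all add: le_floor_iff abs_le_iff)
  then show ?thesis by simp
qed

lemma cover_k:
  fixes j1 :: "'n::finite" and a b c c0 :: real and k :: nat
  defines "R \<equiv> Rk k" and "D \<equiv> Dk CARD('n) a b k" and "Q \<equiv> Qk CARD('n) a b k"
  assumes c: "0 < c" and c0: "c0 \<le> 1" and D1: "1 \<le> D" and Q1: "1 \<le> Q"
  shows "\<exists>VV. finite VV \<and> (\<forall>A\<in>VV. bounded A \<and> diameter A \<le> real CARD('n) * (c * R powr -1)) \<and>
     Fk j1 a b c k \<inter> {x. \<forall>i. 0 \<le> x$i \<and> x$i \<le> c0} \<subseteq> \<Union>VV \<and>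
     real (card VV) \<le> Q * (2*((1+c)*Q*D^2/(2*R))+1) * (2*((1+c)*D*Q)+1)^(CARD('n)-1) * (R powr (1/2) + 1)"
proof -
  define w where "w = c * R powr (-1/2)"
  define h where "h = c * R powr (-1)"
  define A1 where "A1 = (1+c)*Q*D^2/(2*R)"
  define A2 where "A2 = (1+c)*D*Q"
  define M where "M = \<lfloor>R powr (1/2)\<rfloor>"
  define P where "P i = (if i = j1 then {-\<lfloor>A1\<rfloor>..\<lfloor>A1\<rfloor>} else {-\<lfloor>A2\<rfloor>..\<lfloor>A2\<rfloor>})" for i
  define T where "T = {1..\<lfloor>Q\<rfloor>} \<times> (PiE UNIV P) \<times> {0..M}"
  define ctr where "ctr t = slab_center j1 a b k (fst (snd t)) (fst t)" for t :: "int \<times> ('n \<Rightarrow> int) \<times> int"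
  define piece where "piece t = slab j1 c k (ctr t) \<inter>
      {x. (ctr t)$j1 - w/2 + of_int (snd (snd t)) * h \<le> x$j1 \<and> x$j1 \<le> (ctr t)$j1 - w/2 + (of_int (snd (snd t)) + 1) * h}" for t :: "int \<times> ('n \<Rightarrow> int) \<times> int"
  have R1: "1 \<le> R" unfolding R_def Rk_def by simp
  then have Rpos: "0 < R" by simp
  have hpos: "0 < h" unfolding h_def using c Rpos by simp
  have wpos: "0 < w" unfolding w_def using c Rpos by simp
  have wh: "w = h * R powr (1/2)"
  proof -
    have "R powr (-1/2) = R powr (-1 + 1/2)" by simp
    also have "\<dots> = R powr (-1) * R powr (1/2)" by (rule powr_add)
    finally have "R powr (-1/2) = R powr (-1) * R powr (1/2)" .
    then show ?thesis unfolding w_def h_def by simp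
  qed
  have Rm: "R powr (-1/2) \<le> 1" using R1 by (simp add: powr_minus_divide ge_one_powr_ge_zero)
  have w_le: "w \<le> c" unfolding w_def using Rm c by (simp add: mult_left_le)
  have slab_iff: "x \<in> slab j1 c k z \<longleftrightarrow> \<bar>x$j1 - z$j1\<bar> \<le> w/2 \<and> (\<forall>i. i\<noteq>j1 \<longrightarrow> \<bar>x$i - z$i\<bar> \<le> h/2)" for x z
    by (simp add: slab_def w_def h_def R_def)
  define VV where "VV = piece ` T"
  have finP: "finite (PiE UNIV P)" by (rule finite_PiE) (auto simp: P_def)
  have finT: "finite T" unfolding T_def using finP by simp
  have diam: "bounded A \<and> diameter A \<le> real CARD('n) * h" if AV: "A \<in> VV" for A
  proof -
    obtain t where t: "A = piece t" using AV unfolding VV_def by blast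
    have "norm (x - y) \<le> real CARD('n) * h" if xy: "x \<in> A" "y \<in> A" for x y
    proof -
      have coord: "\<bar>(x - y)$i\<bar> \<le> h" for i
      proof (cases "i = j1")
        case True
        then show ?thesis using xy t by (auto simp: piece_def algebra_simps)
      next
        case False
        then have "\<bar>x$i - (ctr t)$i\<bar> \<le> h/2" "\<bar>y$i - (ctr t)$i\<bar> \<le> h/2"
          using xy t by (auto simp: piece_def slab_iff)
        then show ?thesis unfolding vector_minus_component by arith
      qed
      have "norm (x - y) \<le> (\<Sum>i\<in>UNIV. \<bar>(x - y)$i\<bar>)" by (rule norm_le_l1_cart)
      also have "\<dots> \<le> (\<Sum>i\<in>(UNIV::'n set). h)" by (rule sum_mono) (rule coord)
      finally show ?thesis by simp
    qed
    then show ?thesis using bounded_diam_le[of "real CARD('n) * h" A] hpos by auto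
  qed
  have h_le: "h \<le> c" unfolding h_def using R1 c by (simp add: powr_minus_divide divide_le_eq)
  have cover: "Fk j1 a b c k \<inter> {x. \<forall>i. 0 \<le> x$i \<and> x$i \<le> c0} \<subseteq> \<Union>VV"
  proof
    fix x assume xF: "x \<in> Fk j1 a b c k \<inter> {x. \<forall>i. 0 \<le> x$i \<and> x$i \<le> c0}"
    then obtain p q where pq: "admissible j1 p q" "1 \<le> q" "real_of_int q \<le> Q"
      "x \<in> slab j1 c k (slab_center j1 a b k p q)"
      unfolding Fk_def Q_def by blast
    have cube: "0 \<le> x$i" "x$i \<le> 1" for i using xF c0 by (auto intro: order_trans)
    define z where "z = slab_center j1 a b k p q"
    have xs: "\<bar>x$j1 - z$j1\<bar> \<le> w/2" "\<And>i. i \<noteq> j1 \<Longrightarrow> \<bar>x$i - z$i\<bar> \<le> h/2"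
      using pq(4) unfolding z_def slab_iff by auto
    have zb: "\<bar>z$i\<bar> \<le> 1 + c" for i
    proof (cases "i = j1")
      case True
      then show ?thesis using xs(1) cube[of i] w_le c unfolding abs_le_iff True by linarith
    next
      case False
      then show ?thesis using xs(2)[OF False] cube[of i] h_le c unfolding abs_le_iff by linarith
    qed
    have qpos: "0 < real_of_int q" using pq(2) by simp
    have Dpos: "0 < D" using D1 by simp
    have zj1: "z$j1 = 2 * real_of_int (p j1) * R / (real_of_int q * D^2)"
      unfolding z_def slab_center_def R_def D_def by simp
    have zi: "i \<noteq> j1 \<Longrightarrow> z$i = real_of_int (p i) / (D * real_of_int q)" for i
      unfolding z_def slab_center_def R_def D_def by simp
    have pj1: "\<bar>real_of_int (p j1)\<bar> \<le> A1"
    proof -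
      have "real_of_int (p j1) = z$j1 * (real_of_int q * D^2) / (2 * R)"
        using zj1 qpos Dpos Rpos by (simp add: field_simps)
      then have "\<bar>real_of_int (p j1)\<bar> = \<bar>z$j1\<bar> * (real_of_int q * D^2) / (2 * R)"
        using qpos Rpos by (simp add: abs_mult)
      also have "\<dots> \<le> (1 + c) * (Q * D^2) / (2 * R)"
        using zb[of j1] qpos Rpos pq(3)
        by (intro divide_right_mono mult_mono mult_right_mono) auto
      finally show ?thesis unfolding A1_def by simp
    qed
    have pi: "\<bar>real_of_int (p i)\<bar> \<le> A2" if "i \<noteq> j1" for i
    proof -
      have "real_of_int (p i) = z$i * (D * real_of_int q)"
        using zi[OF that] qpos Dpos by (simp add: field_simps)
      then have "\<bar>real_of_int (p i)\<bar> = \<bar>z$i\<bar> * (D * real_of_int q)"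
        using qpos Dpos by (simp add: abs_mult)
      also have "\<dots> \<le> (1 + c) * (D * Q)"
        using zb[of i] qpos Dpos pq(3)
        by (intro mult_mono) auto
      finally show ?thesis unfolding A2_def by (simp add: mult.assoc)
    qed
    have pP: "p \<in> PiE UNIV P"
    proof -
      have "p i \<in> P i" for i
      proof (cases "i = j1")
        case True
        then show ?thesis using int_in_floor_range[OF pj1] unfolding P_def by simp
      next
        case False
        then show ?thesis using int_in_floor_range[OF pi[OF False]] unfolding P_def by simp
      qed
      then show ?thesis by (simp add: PiE_UNIV_domain)
    qed
    define u where "u = x$j1 - z$j1 + w/2"
    have u: "0 \<le> u" "u \<le> w" using xs(1) unfolding u_def abs_le_iff by linarith+
    define m where "m = \<lfloor>u / h\<rfloor>"
    have m0: "0 \<le> m" unfolding m_def using u hpos by simp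
    have mM: "m \<le> M" unfolding m_def M_def
      using u hpos wh by (intro floor_mono) (simp add: divide_le_eq mult.commute)
    have mh: "real_of_int m * h \<le> u" "u \<le> (real_of_int m + 1) * h"
    proof -
      have "real_of_int m \<le> u / h" "u / h < real_of_int m + 1" unfolding m_def by linarith+
      then show "real_of_int m * h \<le> u" "u \<le> (real_of_int m + 1) * h"
        using hpos by (simp_all add: field_simps)
    qed
    define t where "t = (q, p, m)"
    have tT: "t \<in> T" unfolding t_def T_def using pq(2,3) pP m0 mM by (simp add: le_floor_iff)
    have "ctr t = z" unfolding ctr_def t_def z_def by simp
    then have "x \<in> piece t" unfolding piece_def using pq(4) mh unfolding z_def u_def t_def
      by (simp add: algebra_simps)
    then show "x \<in> \<Union>VV" using tT unfolding VV_def by blast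
  qed
  have A1nn: "0 \<le> A1" unfolding A1_def using c Rpos Q1 by simp
  have A2nn: "0 \<le> A2" unfolding A2_def using c D1 Q1 by simp
  have cP: "real (card (P i)) = (if i = j1 then 2 * real_of_int \<lfloor>A1\<rfloor> + 1 else 2 * real_of_int \<lfloor>A2\<rfloor> + 1)" for i
    using A1nn A2nn unfolding P_def by auto
  have cPiE: "real (card (PiE UNIV P)) = (2 * real_of_int \<lfloor>A1\<rfloor> + 1) * (2 * real_of_int \<lfloor>A2\<rfloor> + 1) ^ (CARD('n) - 1)"
  proof -
    have "real (card (PiE UNIV P)) = (\<Prod>i\<in>UNIV. real (card (P i)))"
      by (simp add: card_PiE)
    also have "\<dots> = real (card (P j1)) * (\<Prod>i\<in>UNIV - {j1}. real (card (P i)))"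
      by (rule prod.remove) auto
    also have "(\<Prod>i\<in>UNIV - {j1}. real (card (P i))) = (\<Prod>i\<in>UNIV - {j1}. 2 * real_of_int \<lfloor>A2\<rfloor> + 1)"
      by (rule prod.cong) (auto simp: cP)
    also have "\<dots> = (2 * real_of_int \<lfloor>A2\<rfloor> + 1) ^ (CARD('n) - 1)"
      by (simp add: card_Diff_singleton)
    finally show ?thesis by (simp add: cP)
  qed
  have cardT: "real (card T) = real_of_int \<lfloor>Q\<rfloor> * (real (card (PiE UNIV P)) * (real_of_int M + 1))"
  proof -
    have "0 \<le> \<lfloor>Q\<rfloor>" using Q1 by simp
    moreover have "0 \<le> M" unfolding M_def by simp
    ultimately show ?thesis unfolding T_def by (simp add: card_cartesian_product)
  qed
  have b1: "real_of_int \<lfloor>Q\<rfloor> \<le> Q" by simp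
  have b2: "real (card (PiE UNIV P)) \<le> (2*A1+1) * (2*A2+1)^(CARD('n)-1)"
    unfolding cPiE using A1nn A2nn
    by (intro mult_mono power_mono) auto
  have b3: "real_of_int M + 1 \<le> R powr (1/2) + 1" unfolding M_def by simp
  have "real (card VV) \<le> real (card T)" unfolding VV_def using card_image_le[OF finT] by simp
  also have "\<dots> \<le> Q * (((2*A1+1) * (2*A2+1)^(CARD('n)-1)) * (R powr (1/2) + 1))"
  proof -
    have M0: "0 \<le> real_of_int M + 1" unfolding M_def by simp
    show ?thesis
    unfolding cardT using b1 b2 b3 Q1 A1nn A2nn M0
    by (intro mult_mono) auto
  qed
  finally have cardV: "real (card VV) \<le> Q * (2*A1+1) * (2*A2+1)^(CARD('n)-1) * (R powr (1/2) + 1)"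
    by (simp add: mult.assoc)
  have finV: "finite VV" unfolding VV_def using finT by simp
  show ?thesis
    using finV diam cover cardV unfolding h_def A1_def A2_def by blast
qed



lemma real_bound:
  fixes n :: nat and a b c :: real and k :: nat
  defines "R \<equiv> Rk k" and "D \<equiv> Dk n a b k" and "Q \<equiv> Qk n a b k"
  assumes n2: "2 \<le> n" and a: "0 < a" "a \<le> 1" and b: "0 < b" "b \<le> 1/2" "2 * a \<ge> 1 + b" and c: "0 < c"
  shows "1 \<le> D" "1 \<le> Q"
    "Q * (2*((1+c)*Q*D^2/(2*R))+1) * (2*((1+c)*D*Q)+1)^(n-1) * (R powr (1/2) + 1)
      \<le> (4*(1+c)*(3*(1+c))^(n-1)) * R powr (1/2 + (real n - 1) * a + b)"
proof -
  define d where "d = (real n - (real n - 1) * a + real n * b) / (real n + 1)"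
  define e where "e = (real n - 1) / (real n + 1) * (2 * a - b - 1)"
  have R1: "1 \<le> R" unfolding R_def Rk_def by simp
  then have Rpos: "0 < R" by simp
  have D: "D = R powr d" unfolding D_def Dk_def d_def R_def by simp
  have Q: "Q = R powr e" unfolding Q_def Qk_def e_def R_def by simp
  have n1: "1 \<le> real n" using n2 by simp
  have d0: "0 \<le> d"
  proof -
    have "(real n - 1) * a \<le> real n - 1" using a n1 by (simp add: mult_left_le)
    then show ?thesis unfolding d_def using b n1 by (intro divide_nonneg_pos) auto
  qed
  have e0: "0 \<le> e" unfolding e_def using n1 b by (intro mult_nonneg_nonneg) auto
  show D1: "1 \<le> D" unfolding D using R1 d0 by (rule ge_one_powr_ge_zero)
  show Q1: "1 \<le> Q" unfolding Q using R1 e0 by (rule ge_one_powr_ge_zero)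
  have nz: "real n + 1 \<noteq> 0" by linarith
  have dN: "d * (real n + 1) = real n - (real n - 1) * a + real n * b" unfolding d_def using nz by simp
  have eN: "e * (real n + 1) = (real n - 1) * (2 * a - b - 1)" unfolding e_def using nz by simp
  have "(e + 2 * d - 1) * (real n + 1) = b * (real n + 1)"
  proof -
    have "(e + 2 * d - 1) * (real n + 1) = e * (real n + 1) + 2 * (d * (real n + 1)) - (real n + 1)"
      by (simp add: algebra_simps)
    also have "\<dots> = b * (real n + 1)" unfolding dN eN by (simp add: algebra_simps)
    finally show ?thesis .
  qed
  then have ex1: "e + 2 * d - 1 = b" using nz by simp
  have "(e + b + (real n - 1) * (d + e) + 1/2) * (real n + 1) = (1/2 + (real n - 1) * a + b) * (real n + 1)"
  proof -
    have "(e + b + (real n - 1) * (d + e) + 1/2) * (real n + 1) = real n * (e * (real n + 1)) + (real n - 1) * (d * (real n + 1)) + (b + 1/2) * (real n + 1)"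
      by (simp add: algebra_simps)
    also have "\<dots> = (1/2 + (real n - 1) * a + b) * (real n + 1)" unfolding dN eN by (simp add: algebra_simps)
    finally show ?thesis .
  qed
  then have ex2: "e + b + (real n - 1) * (d + e) + 1/2 = 1/2 + (real n - 1) * a + b" using nz by simp
  have QDR: "Q * D^2 / R = R powr b"
  proof -
    have "D^2 = R powr (2*d)" unfolding D using Rpos by (simp add: powr_power)
    then have "Q * D^2 / R = R powr e * R powr (2*d) / R" unfolding Q by simp
    also have "\<dots> = R powr (e + 2*d) / R" by (simp only: powr_add)
    also have "\<dots> = R powr (e + 2*d - 1)" using Rpos by (simp add: powr_diff)
    finally show ?thesis using ex1 by simp
  qed
  have Rb1: "1 \<le> R powr b" using R1 b by (simp add: ge_one_powr_ge_zero)
  have f1: "2*((1+c)*Q*D^2/(2*R))+1 \<le> 2*(1+c) * R powr b"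
  proof -
    have "2*((1+c)*Q*D^2/(2*R)) = (1+c) * (Q * D^2 / R)" using Rpos by (simp add: field_simps)
    also have "\<dots> = (1+c) * R powr b" by (simp add: QDR)
    finally have "2*((1+c)*Q*D^2/(2*R)) = (1+c) * R powr b" .
    moreover have "1 * 1 \<le> (1+c) * R powr b" using Rb1 c by (intro mult_mono) auto
    ultimately have "2*((1+c)*Q*D^2/(2*R))+1 \<le> 2*((1+c) * R powr b)" by linarith
    then show ?thesis by (simp only: mult.assoc)
  qed
  have DQ: "D * Q = R powr (d + e)" unfolding D Q by (simp add: powr_add)
  have DQ1: "1 * 1 \<le> D * Q" using D1 Q1 by (intro mult_mono) auto
  have f2: "2*((1+c)*D*Q)+1 \<le> 3*(1+c) * R powr (d + e)"
  proof -
    have "1 * 1 \<le> (1+c) * (D*Q)" using DQ1 c by (intro mult_mono) auto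
    then show ?thesis unfolding DQ[symmetric] by (simp add: algebra_simps)
  qed
  have f2': "(2*((1+c)*D*Q)+1)^(n-1) \<le> (3*(1+c))^(n-1) * R powr ((real n - 1) * (d + e))"
  proof -
    have "(2*((1+c)*D*Q)+1)^(n-1) \<le> (3*(1+c) * R powr (d + e))^(n-1)"
      using f2 c D1 Q1 by (intro power_mono) auto
    also have "\<dots> = (3*(1+c))^(n-1) * R powr ((real n - 1) * (d + e))"
      using Rpos n1 by (simp add: power_mult_distrib powr_power of_nat_diff)
    finally show ?thesis .
  qed
  have Rh1: "1 \<le> R powr (1/2)" using R1 by (simp add: ge_one_powr_ge_zero)
  have f3: "R powr (1/2) + 1 \<le> 2 * R powr (1/2)" using Rh1 by simp
  define K1 where "K1 = 1 + c"
  define K3 where "K3 = (3*(1+c))^(n-1)"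
  define Y where "Y = (real n - 1) * (d + e)"
  have nn1: "0 \<le> 2*((1+c)*Q*D^2/(2*R))+1" using c Q1 Rpos by simp
  have nn2: "0 \<le> (2*((1+c)*D*Q)+1)^(n-1)" using c Q1 D1 by simp
  have nn3: "0 \<le> R powr (1/2) + 1" by simp
  have "Q * (2*((1+c)*Q*D^2/(2*R))+1) * (2*((1+c)*D*Q)+1)^(n-1) * (R powr (1/2) + 1)
     \<le> R powr e * (2*K1 * R powr b) * (K3 * R powr Y) * (2 * R powr (1/2))"
  proof -
    have h1: "Q * (2*((1+c)*Q*D^2/(2*R))+1) \<le> R powr e * (2*K1 * R powr b)"
      unfolding Q[symmetric] K1_def using f1 Q1 by (intro mult_left_mono) auto
    have h2: "(2*((1+c)*D*Q)+1)^(n-1) \<le> K3 * R powr Y" using f2' unfolding K3_def Y_def .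
    have p1: "0 \<le> R powr e * (2*K1 * R powr b)" unfolding K1_def using c by simp
    have h12: "Q * (2*((1+c)*Q*D^2/(2*R))+1) * (2*((1+c)*D*Q)+1)^(n-1) \<le> R powr e * (2*K1 * R powr b) * (K3 * R powr Y)"
      by (rule mult_mono[OF h1 h2 p1 nn2])
    have p2: "0 \<le> R powr e * (2*K1 * R powr b) * (K3 * R powr Y)" unfolding K1_def K3_def using c by simp
    show ?thesis by (rule mult_mono[OF h12 f3 p2 nn3])
  qed
  also have "\<dots> = (4*K1*K3) * (R powr e * R powr b * R powr Y * R powr (1/2))"
    by (simp add: mult_ac)
  also have "R powr e * R powr b * R powr Y * R powr (1/2) = R powr (e + b + Y + 1/2)"
    by (simp only: powr_add)
  finally show "Q * (2*((1+c)*Q*D^2/(2*R))+1) * (2*((1+c)*D*Q)+1)^(n-1) * (R powr (1/2) + 1)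
      \<le> (4*(1+c)*(3*(1+c))^(n-1)) * R powr (1/2 + (real n - 1) * a + b)" unfolding Y_def ex2 K1_def K3_def .
qed



lemma Rk_powr: "Rk k powr x = (2 powr x) ^ k"
proof -
  have "Rk k powr x = (2 powr real k) powr x" unfolding Rk_def by (simp add: powr_realpow)
  also have "\<dots> = 2 powr (real k * x)" by (simp add: powr_powr)
  also have "\<dots> = (2 powr x) ^ k" by (simp add: powr_power)
  finally show ?thesis .
qed

lemma measure_zero:
  fixes j1 :: "'n::finite" and a b c c0 s :: real
  assumes n2: "CARD('n) \<ge> 2"
    and a: "0 < a" "a \<le> 1" and b: "0 < b" "b \<le> 1/2" "2 * a \<ge> 1 + b"
    and c: "0 < c" and c0: "c0 \<le> 1"
    and s: "1/2 + (real CARD('n) - 1) * a + b < s"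
  shows "hausdorff_measure s (divergence_set j1 a b c \<inter> {x :: real^'n. \<forall>i. 0 \<le> x $ i \<and> x $ i \<le> c0}) = 0"
proof -
  define E where "E = divergence_set j1 a b c \<inter> {x :: real^'n. \<forall>i. 0 \<le> x $ i \<and> x $ i \<le> c0}"
  define al where "al = 1/2 + (real CARD('n) - 1) * a + b"
  define K where "K = 4*(1+c)*(3*(1+c))^(CARD('n)-1)"
  define r where "r k = real CARD('n) * (c * Rk k powr -1)" for k
  have al0: "0 < al" unfolding al_def using n2 a b by (simp add: add_pos_nonneg)
  have s0: "0 < s" using al0 s unfolding al_def by linarith
  have K0: "0 < K" unfolding K_def using c by simp
  have "\<forall>k. \<exists>VV. finite VV \<and> (\<forall>A\<in>VV. bounded A \<and> diameter A \<le> r k) \<and>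
     Fk j1 a b c k \<inter> {x. \<forall>i. 0 \<le> x$i \<and> x$i \<le> c0} \<subseteq> \<Union>VV \<and>
     real (card VV) \<le> K * Rk k powr al"
  proof
    fix k
    note rb = real_bound[of "CARD('n)" a b c k, OF n2 a b c]
    obtain VV where VV: "finite VV" "\<forall>A\<in>VV. bounded A \<and> diameter A \<le> r k"
      "Fk j1 a b c k \<inter> {x. \<forall>i. 0 \<le> x$i \<and> x$i \<le> c0} \<subseteq> \<Union>VV"
      "real (card VV) \<le> Qk CARD('n) a b k * (2*((1+c)*Qk CARD('n) a b k*(Dk CARD('n) a b k)^2/(2*Rk k))+1)
         * (2*((1+c)*Dk CARD('n) a b k*Qk CARD('n) a b k)+1)^(CARD('n)-1) * (Rk k powr (1/2) + 1)"
      using cover_k[of c c0 a b k j1, OF c c0 rb(1) rb(2)] unfolding r_def by blast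
    show "\<exists>VV. finite VV \<and> (\<forall>A\<in>VV. bounded A \<and> diameter A \<le> r k) \<and>
     Fk j1 a b c k \<inter> {x. \<forall>i. 0 \<le> x$i \<and> x$i \<le> c0} \<subseteq> \<Union>VV \<and>
     real (card VV) \<le> K * Rk k powr al"
    proof -
      have c4: "real (card VV) \<le> K * Rk k powr al"
        using order_trans[OF VV(4) rb(3)] unfolding K_def al_def .
      show ?thesis using VV(1-3) c4 by blast
    qed
  qed
  then have "\<exists>VF. \<forall>k. finite (VF k) \<and> (\<forall>A\<in>VF k. bounded A \<and> diameter A \<le> r k) \<and>
     Fk j1 a b c k \<inter> {x. \<forall>i. 0 \<le> x$i \<and> x$i \<le> c0} \<subseteq> \<Union>(VF k) \<and>
     real (card (VF k)) \<le> K * Rk k powr al" by (rule choice)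
  then obtain VF where VFall: "\<forall>k. finite (VF k) \<and> (\<forall>A\<in>VF k. bounded A \<and> diameter A \<le> r k) \<and>
     Fk j1 a b c k \<inter> {x. \<forall>i. 0 \<le> x$i \<and> x$i \<le> c0} \<subseteq> \<Union>(VF k) \<and>
     real (card (VF k)) \<le> K * Rk k powr al" by blast
  have VF: "\<And>k. finite (VF k)" "\<And>k A. A \<in> VF k \<Longrightarrow> bounded A \<and> diameter A \<le> r k"
    "\<And>k. Fk j1 a b c k \<inter> {x. \<forall>i. 0 \<le> x$i \<and> x$i \<le> c0} \<subseteq> \<Union>(VF k)"
    "\<And>k. real (card (VF k)) \<le> K * Rk k powr al"
    using VFall by blast+
  define \<rho> where "\<rho> = 2 powr (al - s)"
  have \<rho>0: "0 < \<rho>" unfolding \<rho>_def by simp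
  have \<rho>1: "\<rho> < 1" unfolding \<rho>_def using s unfolding al_def by (simp add: powr_less_one)
  define C where "C = K * (real CARD('n) * c) powr s"
  have C0: "0 < C" unfolding C_def using K0 c by simp
  have r_eq: "r k powr s = (real CARD('n) * c) powr s * Rk k powr (-s)" for k
  proof -
    have Rpos: "0 < Rk k" unfolding Rk_def by simp
    have "r k = (real CARD('n) * c) * Rk k powr -1" unfolding r_def by simp
    then have "r k powr s = ((real CARD('n) * c) * Rk k powr -1) powr s" by (simp only:)
    also have "\<dots> = (real CARD('n) * c) powr s * (Rk k powr -1) powr s" by (rule powr_mult)
    also have "(Rk k powr -1) powr s = Rk k powr (-s)" by (subst powr_powr) simp
    finally show ?thesis .
  qed
  have term_le: "real (card (VF k)) * r k powr s \<le> C * \<rho> ^ k" for k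
  proof -
    have "real (card (VF k)) * r k powr s \<le> (K * Rk k powr al) * r k powr s"
      using VF(4)[of k] by (rule mult_right_mono) simp
    also have "\<dots> = C * (Rk k powr al * Rk k powr (-s))" unfolding r_eq C_def by (simp add: mult_ac)
    also have "Rk k powr al * Rk k powr (-s) = Rk k powr (al - s)" by (simp add: powr_add[symmetric])
    also have "Rk k powr (al - s) = \<rho> ^ k" unfolding \<rho>_def by (rule Rk_powr)
    finally show ?thesis .
  qed
  have rmono: "r k \<le> r N" if "N \<le> k" for N k
  proof -
    have "Rk k powr -1 \<le> Rk N powr -1" unfolding Rk_powr using that
      by (intro power_decreasing) (auto simp: powr_minus_divide)
    then show ?thesis unfolding r_def using c by (intro mult_left_mono) auto
  qed
  have r0: "0 \<le> r k" for k unfolding r_def using c by simp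
  have "hausdorff_content \<delta> s E = 0" if \<delta>: "0 < \<delta>" for \<delta>
  proof -
    have "hausdorff_content \<delta> s E \<le> 0 + ennreal \<epsilon>" if \<epsilon>: "0 < \<epsilon>" for \<epsilon>
    proof -
      have ev1: "eventually (\<lambda>N. C / (1 - \<rho>) * \<rho> ^ N < \<epsilon>) sequentially"
      proof -
        have "(\<lambda>N. C / (1 - \<rho>) * \<rho> ^ N) \<longlonglongrightarrow> C / (1 - \<rho>) * 0"
          using \<rho>0 \<rho>1 by (intro tendsto_mult tendsto_const LIMSEQ_power_zero) auto
        then show "eventually (\<lambda>N. C / (1 - \<rho>) * \<rho> ^ N < \<epsilon>) sequentially"
          using \<epsilon> by (intro order_tendstoD) auto
      qed
      have ev2: "eventually (\<lambda>N. r N \<le> \<delta>) sequentially"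
      proof -
        have "r = (\<lambda>k. real CARD('n) * c * (2 powr -1) ^ k)" unfolding r_def Rk_powr by (simp add: fun_eq_iff mult.assoc)
        moreover have "(\<lambda>k. real CARD('n) * c * (2 powr -1) ^ k) \<longlonglongrightarrow> real CARD('n) * c * 0"
          by (intro tendsto_mult tendsto_const LIMSEQ_power_zero) (simp add: powr_minus_divide)
        ultimately have "r \<longlonglongrightarrow> 0" by simp
        then have "eventually (\<lambda>N. r N < \<delta>) sequentially" using \<delta> by (intro order_tendstoD) auto
        then show ?thesis by eventually_elim simp
      qed
      obtain N0 where N0: "\<forall>n\<ge>N0. C / (1 - \<rho>) * \<rho> ^ n < \<epsilon> \<and> r n \<le> \<delta>"
        using eventually_conj[OF ev1 ev2] unfolding eventually_sequentially by blast
      define N where "N = N0"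
      have N: "C / (1 - \<rho>) * \<rho> ^ N < \<epsilon>" "r N \<le> \<delta>" using N0 unfolding N_def by auto
      define V where "V k = (if N \<le> k then VF k else {})" for k
      define g where "g k = (if N \<le> k then C * \<rho> ^ k else 0)" for k
      have gs: "g sums (C / (1 - \<rho>) * \<rho> ^ N)"
      proof -
        have "(\<lambda>i. (C * \<rho> ^ N) * \<rho> ^ i) sums ((C * \<rho> ^ N) * (1 / (1 - \<rho>)))"
          using \<rho>0 \<rho>1 by (intro sums_mult geometric_sums) simp
        moreover have "(\<lambda>i. g (i + N)) = (\<lambda>i. (C * \<rho> ^ N) * \<rho> ^ i)"
          by (auto simp: g_def power_add mult_ac)
        ultimately have "(\<lambda>i. g (i + N)) sums ((C * \<rho> ^ N) * (1 / (1 - \<rho>)))" by simp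
        moreover have "(C * \<rho> ^ N) * (1 / (1 - \<rho>)) = C / (1 - \<rho>) * \<rho> ^ N" by simp
        ultimately have "(\<lambda>i. g (i + N)) sums (C / (1 - \<rho>) * \<rho> ^ N)" by simp
        moreover have "sum g {..<N} = 0" by (simp add: g_def)
        ultimately show ?thesis using sums_iff_shift[of g N] by simp
      qed
      define f where "f k = real (card (V k)) * r k powr s" for k
      have fg: "f k \<le> g k" for k unfolding f_def g_def V_def using term_le by simp
      have f0: "0 \<le> f k" for k unfolding f_def by simp
      have fs: "summable f"
        by (rule summable_comparison_test'[OF sums_summable[OF gs], of 0]) (use f0 fg in simp)
      have "hausdorff_content \<delta> s E \<le> ennreal (\<Sum>k. real (card (V k)) * r k powr s)"
      proof (rule content_le)
        show "finite (V k)" for k unfolding V_def using VF(1) by simp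
        show "bounded A \<and> diameter A \<le> r k \<and> diameter A \<le> \<delta>" if "A \<in> V k" for k A
        proof -
          have "N \<le> k" "A \<in> VF k" using that unfolding V_def by (auto split: if_splits)
          then show ?thesis using VF(2)[of A k] rmono[of N k] N(2) by auto
        qed
        show "0 \<le> s" using s0 by simp
        show "0 \<le> \<delta>" using \<delta> by simp
        show "summable (\<lambda>k. real (card (V k)) * r k powr s)" using fs unfolding f_def .
        show "E \<subseteq> (\<Union>k. \<Union>(V k))"
        proof
          fix x assume "x \<in> E"
          then have xd: "x \<in> divergence_set j1 a b c" and xc: "x \<in> {x. \<forall>i. 0 \<le> x$i \<and> x$i \<le> c0}"
            unfolding E_def by auto
          then obtain k where "N \<le> k" "x \<in> Fk j1 a b c k" unfolding divergence_set_def by blast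
          then have "x \<in> \<Union>(V k)" using VF(3)[of k] xc unfolding V_def by auto
          then show "x \<in> (\<Union>k. \<Union>(V k))" by blast
        qed
      qed
      also have "(\<Sum>k. real (card (V k)) * r k powr s) \<le> C / (1 - \<rho>) * \<rho> ^ N"
        using suminf_le[OF fg fs sums_summable[OF gs]] sums_unique[OF gs] unfolding f_def by simp
      finally have "hausdorff_content \<delta> s E \<le> ennreal (C / (1 - \<rho>) * \<rho> ^ N)" by (simp add: ennreal_leI)
      also have "\<dots> \<le> ennreal \<epsilon>" using N(1) by (intro ennreal_leI) simp
      finally show ?thesis by simp
    qed
    then have "hausdorff_content \<delta> s E \<le> 0" by (rule ennreal_le_epsilon) auto
    then show ?thesis by simp
  qed
  then show ?thesis unfolding hausdorff_measure_def E_def[symmetric] by simp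
qed

theorem theorem5p1:
  fixes j1 :: "'n::finite" and a b c c0 :: real
  assumes "CARD('n) \<ge> 2"
    and "0 < a" "a \<le> 1" "0 < b" "b \<le> 1/2" "2 * a \<ge> 1 + b"
    and "0 < c"
    and "0 < c0" "c0 \<le> 1"
  shows "hausdorff_dim (divergence_set j1 a b c \<inter> {x :: real^'n. \<forall>i. 0 \<le> x $ i \<and> x $ i \<le> c0})
           \<le> ereal (1/2 + (real CARD('n) - 1) * a + b)"
proof -
  define al where "al = 1/2 + (real CARD('n) - 1) * a + b"
  have al0: "0 < al" unfolding al_def using assms by (simp add: add_pos_nonneg)
  show ?thesis unfolding al_def[symmetric]
  proof (rule ereal_le_epsilon2)
    fix e :: real assume e: "0 < e"
    have "ereal (al + e) \<in> {ereal s | s. 0 \<le> s \<and> hausdorff_measure s (divergence_set j1 a b c \<inter> {x :: real^'n. \<forall>i. 0 \<le> x $ i \<and> x $ i \<le> c0}) = 0}"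
      using measure_zero[of a b c c0 "al + e" j1] assms e al0 unfolding al_def by auto
    then have "hausdorff_dim (divergence_set j1 a b c \<inter> {x :: real^'n. \<forall>i. 0 \<le> x $ i \<and> x $ i \<le> c0}) \<le> ereal (al + e)"
      unfolding hausdorff_dim_def by (rule Inf_lower)
    then show "hausdorff_dim (divergence_set j1 a b c \<inter> {x :: real^'n. \<forall>i. 0 \<le> x $ i \<and> x $ i \<le> c0}) \<le> ereal al + ereal e"
      by simp
  qed
qed

end
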